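(* Let $\Omega\subset\mathbb{R}^d$ ($d=2,3$) be a bounded polyhedral domain, $V_h$ the first-order finite element space on a quasi-uniform triangulation with nodal basis $\varphi_1,\dots,\varphi_n$, $K_{j,i}=(\nabla\varphi_i,\nabla\varphi_j)$, $M_{j,i}=(\varphi_i,\varphi_j)$. Let $\tilde K^{-N}$ denote the (linear) map $b\mapsto$ result of $N$ iterations, started from the zero initial guess, of a symmetric iterative method for $Kx=b$ (so $\tilde K^{-N}$ is a symmetric matrix). Define $E_N:V_h\to V_h$ by $x_{E_Nu}=(\tilde K^{-N}-K^{-1})Kx_u$, and assume there are $\gamma_0,\gamma_1\in[0,1)$ and $C>0$ independent of $\gamma_0,\gamma_1$ with $$\|E_Nu\|_1\le C\gamma_1^N\|u\|_1,\qquad \|E_Nu\|_0\le C\gamma_0^N\|u\|_0\qquad\forall u\in V_h.$$ Define $P,\tilde P:V_h\to V_h$ by $x_{Pu}=K^{-1}Mx_u$ and $x_{\tilde Pu}=\tilde K^{-N}Mx_u$. Then there exists a constant $C>0$, independent of $\kappa$, $\sigma$, $\gamma_0$, $\gamma_1$, such that $$|((\tilde P-P)u,u)|\le C\gamma_1^N\|u\|_0^2\qquad\forall u\in V_h.$$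
   Context: For $u\in V_h$, $x_u\in\mathbb{C}^n$ is its coefficient vector, $u=\sum_i(x_u)_i\varphi_i$. $(\cdot,\cdot)$ is the complex $L^2(\Omega)$ inner product, $\|\cdot\|_0$ and $\|\cdot\|_1$ the $L^2$ and $H^1$ norms. Equivalently, $Pu\in V_h$ solves $(\nabla Pu,\nabla v)=(u,v)$ for all $v\in V_h$. The parameters $\kappa\in\mathbb{R}$, $\sigma>0$ are those of the Helmholtz problem $\Delta u+(\kappa^2-\mathrm{i}\sigma)u=f$ being preconditioned. *)

theory Defs
  imports Complex_Main
begin

(* Abstract (algebraic) model of the P1 finite element space V_h with n nodal basis
   functions.  A function u in V_h is represented by its coefficient vector
   x_u :: nat => complex (only indices < n matter).  Real n x n matrices are
   represented as nat => nat => real (only indices < n matter). *)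

definition mv :: "nat \<Rightarrow> (nat \<Rightarrow> nat \<Rightarrow> real) \<Rightarrow> (nat \<Rightarrow> complex) \<Rightarrow> (nat \<Rightarrow> complex)" where
  "mv n A x = (\<lambda>i. \<Sum>j<n. complex_of_real (A i j) * x j)"

definition mm :: "nat \<Rightarrow> (nat \<Rightarrow> nat \<Rightarrow> real) \<Rightarrow> (nat \<Rightarrow> nat \<Rightarrow> real) \<Rightarrow> (nat \<Rightarrow> nat \<Rightarrow> real)" where
  "mm n A B = (\<lambda>i j. \<Sum>k<n. A i k * B k j)"

definition msub :: "(nat \<Rightarrow> nat \<Rightarrow> real) \<Rightarrow> (nat \<Rightarrow> nat \<Rightarrow> real) \<Rightarrow> (nat \<Rightarrow> nat \<Rightarrow> real)" where
  "msub A B = (\<lambda>i j. A i j - B i j)"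

definition real_sym :: "nat \<Rightarrow> (nat \<Rightarrow> nat \<Rightarrow> real) \<Rightarrow> bool" where
  "real_sym n A \<longleftrightarrow> (\<forall>i<n. \<forall>j<n. A i j = A j i)"

definition is_inverse :: "nat \<Rightarrow> (nat \<Rightarrow> nat \<Rightarrow> real) \<Rightarrow> (nat \<Rightarrow> nat \<Rightarrow> real) \<Rightarrow> bool" where
  "is_inverse n A B \<longleftrightarrow>
     (\<forall>i<n. \<forall>j<n. mm n A B i j = (if i = j then 1 else 0) \<and> mm n B A i j = (if i = j then 1 else 0))"

(* Sesquilinear form with Gram matrix A: for A = M this is the complex L2 inner
   product (u,v) = sum_{i,j} conj((x_v)_j) M_{j,i} (x_u)_i, for A = K it is (grad u, grad v). *)
definition ip :: "nat \<Rightarrow> (nat \<Rightarrow> nat \<Rightarrow> real) \<Rightarrow> (nat \<Rightarrow> complex) \<Rightarrow> (nat \<Rightarrow> complex) \<Rightarrow> complex" where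
  "ip n A x y = (\<Sum>i<n. \<Sum>j<n. cnj (y j) * complex_of_real (A j i) * x i)"

definition norm0 :: "nat \<Rightarrow> (nat \<Rightarrow> nat \<Rightarrow> real) \<Rightarrow> (nat \<Rightarrow> complex) \<Rightarrow> real" where
  "norm0 n M x = sqrt (Re (ip n M x x))"

definition norm1 :: "nat \<Rightarrow> (nat \<Rightarrow> nat \<Rightarrow> real) \<Rightarrow> (nat \<Rightarrow> nat \<Rightarrow> real) \<Rightarrow> (nat \<Rightarrow> complex) \<Rightarrow> real" where
  "norm1 n M K x = sqrt (Re (ip n M x x) + Re (ip n K x x))"

(* Structural properties of the mass matrix M and stiffness matrix K of the P1 space
   (with homogeneous Dirichlet conditions, so that K is invertible) on a fixed bounded
   domain Omega: both are real symmetric Gram matrices, M is positive definite (linearly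
   independent basis), K is positive semidefinite, and the Poincare/Friedrichs inequality
   ||u||_0^2 <= cP ||grad u||_0^2 holds with a constant cP depending only on Omega. *)
definition fe_setting :: "nat \<Rightarrow> (nat \<Rightarrow> nat \<Rightarrow> real) \<Rightarrow> (nat \<Rightarrow> nat \<Rightarrow> real) \<Rightarrow> real \<Rightarrow> bool" where
  "fe_setting n M K cP \<longleftrightarrow>
     real_sym n M \<and> real_sym n K \<and>
     (\<forall>x. (\<exists>i<n. x i \<noteq> 0) \<longrightarrow> Re (ip n M x x) > 0) \<and>
     (\<forall>x. Re (ip n K x x) \<ge> 0) \<and>
     (\<forall>x. Re (ip n M x x) \<le> cP * Re (ip n K x x))"

(* coefficient vector of E_N u:  x_{E_N u} = (Kt - K^{-1}) K x_u, Kt = tilde K^{-N} *)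
definition EN :: "nat \<Rightarrow> (nat \<Rightarrow> nat \<Rightarrow> real) \<Rightarrow> (nat \<Rightarrow> nat \<Rightarrow> real) \<Rightarrow> (nat \<Rightarrow> nat \<Rightarrow> real) \<Rightarrow> (nat \<Rightarrow> complex) \<Rightarrow> (nat \<Rightarrow> complex)" where
  "EN n K Kinv Kt x = mv n (mm n (msub Kt Kinv) K) x"

definition Pc :: "nat \<Rightarrow> (nat \<Rightarrow> nat \<Rightarrow> real) \<Rightarrow> (nat \<Rightarrow> nat \<Rightarrow> real) \<Rightarrow> (nat \<Rightarrow> complex) \<Rightarrow> (nat \<Rightarrow> complex)" where
  "Pc n Kinv M x = mv n (mm n Kinv M) x"

definition Ptc :: "nat \<Rightarrow> (nat \<Rightarrow> nat \<Rightarrow> real) \<Rightarrow> (nat \<Rightarrow> nat \<Rightarrow> real) \<Rightarrow> (nat \<Rightarrow> complex) \<Rightarrow> (nat \<Rightarrow> complex)" where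
  "Ptc n Kt M x = mv n (mm n Kt M) x"

end

theory Submission
  imports Defs
begin

lemma mv_mv: "mv n A (mv n B x) = mv n (mm n A B) x"
proof
  fix i
  have "mv n A (mv n B x) i = (\<Sum>j<n. \<Sum>k<n. complex_of_real (A i j) * (complex_of_real (B j k) * x k))"
    unfolding mv_def by (simp add: sum_distrib_left)
  also have "\<dots> = (\<Sum>k<n. \<Sum>j<n. complex_of_real (A i j) * (complex_of_real (B j k) * x k))"
    by (rule sum.swap)
  also have "\<dots> = mv n (mm n A B) x i"
    unfolding mv_def mm_def by (simp add: sum_distrib_right mult.assoc)
  finally show "mv n A (mv n B x) i = mv n (mm n A B) x i" .
qed

lemma mv_cong: "(\<And>i. i < n \<Longrightarrow> v i = w i) \<Longrightarrow> mv n A v = mv n A w"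
  unfolding mv_def by (rule ext) (simp)

lemma ip_cong1: "(\<And>i. i < n \<Longrightarrow> v i = w i) \<Longrightarrow> ip n A v y = ip n A w y"
  unfolding ip_def by simp

lemma mv_inv: assumes "is_inverse n K Kinv" "i < n"
  shows "mv n K (mv n Kinv y) i = y i"
proof -
  have "mv n K (mv n Kinv y) i = (\<Sum>j<n. complex_of_real (if i = j then 1 else 0) * y j)"
    unfolding mv_mv by (simp only: mv_def) (use assms in \<open>auto simp: is_inverse_def intro!: sum.cong\<close>)
  also have "\<dots> = y i" proof -
    have "(\<Sum>j<n. complex_of_real (if i = j then 1 else 0) * y j) = (\<Sum>j<n. if i = j then y j else 0)"
      by (intro sum.cong) auto
    thus ?thesis using assms(2) by simp
  qed
  finally show ?thesis .
qed

lemma ip_sym: assumes "real_sym n A"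
  shows "ip n A x y = (\<Sum>j<n. cnj (mv n A y j) * x j)"
proof -
  have "ip n A x y = (\<Sum>i<n. \<Sum>j<n. cnj (complex_of_real (A i j) * y j) * x i)"
    unfolding ip_def using assms unfolding real_sym_def
    by (intro sum.cong refl) (simp add: mult.commute)
  also have "\<dots> = (\<Sum>i<n. cnj (mv n A y i) * x i)"
    unfolding mv_def by (simp add: sum_distrib_right)
  finally show ?thesis .
qed

lemma ip_herm: assumes "real_sym n A"
  shows "ip n A y x = cnj (ip n A x y)"
proof -
  have "ip n A y x = (\<Sum>i<n. \<Sum>j<n. cnj (x j) * complex_of_real (A j i) * y i)"
    unfolding ip_def ..
  also have "\<dots> = (\<Sum>j<n. \<Sum>i<n. cnj (x j) * complex_of_real (A j i) * y i)"
    by (rule sum.swap)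
  also have "\<dots> = (\<Sum>j<n. \<Sum>i<n. cnj (cnj (y i) * complex_of_real (A i j) * x j))"
    using assms unfolding real_sym_def by (intro sum.cong refl) (simp add: mult.commute mult.left_commute)
  also have "\<dots> = cnj (ip n A x y)"
    unfolding ip_def by (simp only: cnj_sum)
  finally show ?thesis .
qed

lemma ip_expand:
  "ip n A (\<lambda>i. x i - s * y i) (\<lambda>i. x i - s * y i) =
     ip n A x x - cnj s * ip n A x y - s * ip n A y x + s * cnj s * ip n A y y"
  unfolding ip_def
  by (simp add: sum_subtractf sum.distrib sum_distrib_left algebra_simps)

lemma cs:
  assumes sym: "real_sym n A" and psd: "\<forall>v. Re (ip n A v v) \<ge> 0"
  shows "cmod (ip n A x y) \<le> sqrt (Re (ip n A x x)) * sqrt (Re (ip n A y y))"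
proof -
  define b where "b = ip n A x y"
  define a where "a = Re (ip n A x x)"
  define c where "c = Re (ip n A y y)"
  have ha: "ip n A x x = complex_of_real a"
  proof -
    have h: "ip n A x x = cnj (ip n A x x)" by (rule ip_herm[OF sym])
    have "Im (ip n A x x) = Im (cnj (ip n A x x))" by (subst h) (rule refl)
    hence "Im (ip n A x x) = 0" by simp
    thus ?thesis unfolding a_def by (simp add: complex_eq_iff)
  qed
  have hc: "ip n A y y = complex_of_real c"
  proof -
    have h: "ip n A y y = cnj (ip n A y y)" by (rule ip_herm[OF sym])
    have "Im (ip n A y y) = Im (cnj (ip n A y y))" by (subst h) (rule refl)
    hence "Im (ip n A y y) = 0" by simp
    thus ?thesis unfolding c_def by (simp add: complex_eq_iff)
  qed
  have hyx: "ip n A y x = cnj b" unfolding b_def by (rule ip_herm[OF sym])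
  have a0: "a \<ge> 0" "c \<ge> 0" using psd a_def c_def by auto
  have nb: "cmod b * cmod b = Re b * Re b + Im b * Im b"
    using cmod_power2[of b] by (simp add: power2_eq_square)
  have key: "0 \<le> a - 2 * t * (cmod b)^2 + t^2 * (cmod b)^2 * c" for t :: real
  proof -
    have "0 \<le> Re (ip n A (\<lambda>i. x i - (t * b) * y i) (\<lambda>i. x i - (t * b) * y i))" using psd by blast
    also have "\<dots> = a - 2 * t * (cmod b)^2 + t^2 * (cmod b)^2 * c"
      unfolding ip_expand ha hc hyx b_def[symmetric]
      by (simp add: power2_eq_square algebra_simps nb)
    finally show ?thesis .
  qed
  have "(cmod b)^2 \<le> a * c"
  proof (cases "c = 0")
    case True
    show ?thesis
    proof (rule ccontr)
      assume "\<not> ?thesis"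
      hence pos: "(cmod b)^2 > 0" using True by simp
      have "0 \<le> a - 2 * ((a+1) / (cmod b)^2) * (cmod b)^2" using key[of "(a+1) / (cmod b)^2"] True by simp
      also have "\<dots> = a - 2 * (a+1)" using pos by simp
      finally show False using a0 by simp
    qed
  next
    case False
    hence cp: "c > 0" using a0 by simp
    have "0 \<le> a - 2 * (1/c) * (cmod b)^2 + (1/c)^2 * (cmod b)^2 * c" using key by blast
    also have "\<dots> = a - (cmod b)^2 / c" using cp by (simp add: power2_eq_square field_simps)
    finally show ?thesis using cp by (simp add: field_simps)
  qed
  hence "sqrt ((cmod b)^2) \<le> sqrt (a * c)" by (rule real_sqrt_le_mono)
  thus ?thesis unfolding b_def a_def c_def by (simp add: real_sqrt_mult)
qed

theorem lemma3:
  fixes C cP :: real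
  assumes "C > 0" and "cP > 0"
  shows "\<exists>C'>0. \<forall>(n::nat) M K Kinv Kt (N::nat) (\<gamma>0::real) (\<gamma>1::real).
           fe_setting n M K cP \<and> is_inverse n K Kinv \<and> real_sym n Kt \<and>
           0 \<le> \<gamma>0 \<and> \<gamma>0 < 1 \<and> 0 \<le> \<gamma>1 \<and> \<gamma>1 < 1 \<and>
           (\<forall>x. norm1 n M K (EN n K Kinv Kt x) \<le> C * \<gamma>1 ^ N * norm1 n M K x) \<and>
           (\<forall>x. norm0 n M (EN n K Kinv Kt x) \<le> C * \<gamma>0 ^ N * norm0 n M x)
           \<longrightarrow> (\<forall>x. cmod (ip n M (\<lambda>i. Ptc n Kt M x i - Pc n Kinv M x i) x)
                      \<le> C' * \<gamma>1 ^ N * (norm0 n M x)\<^sup>2)"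
proof (intro exI[of _ "C * (cP + 1) * cP"] conjI allI impI)
  show "C * (cP + 1) * cP > 0" using assms by simp
next
  fix n M K Kinv Kt N and \<gamma>0 \<gamma>1 :: real and x
  assume H: "fe_setting n M K cP \<and> is_inverse n K Kinv \<and> real_sym n Kt \<and>
           0 \<le> \<gamma>0 \<and> \<gamma>0 < 1 \<and> 0 \<le> \<gamma>1 \<and> \<gamma>1 < 1 \<and>
           (\<forall>x. norm1 n M K (EN n K Kinv Kt x) \<le> C * \<gamma>1 ^ N * norm1 n M K x) \<and>
           (\<forall>x. norm0 n M (EN n K Kinv Kt x) \<le> C * \<gamma>0 ^ N * norm0 n M x)"
  have symM: "real_sym n M" and symK: "real_sym n K"
    and psdK: "\<forall>v. Re (ip n K v v) \<ge> 0" and poin: "\<forall>v. Re (ip n M v v) \<le> cP * Re (ip n K v v)"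
    and inv: "is_inverse n K Kinv" and g1: "0 \<le> \<gamma>1"
    and EN1: "\<forall>x. norm1 n M K (EN n K Kinv Kt x) \<le> C * \<gamma>1 ^ N * norm1 n M K x"
    using H unfolding fe_setting_def by auto
  have psdM: "\<forall>v. Re (ip n M v v) \<ge> 0"
  proof
    fix v
    show "Re (ip n M v v) \<ge> 0"
    proof (cases "\<exists>i<n. v i \<noteq> 0")
      case True thus ?thesis using H unfolding fe_setting_def by (auto intro: less_imp_le)
    next
      case False
      hence "ip n M v v = 0" unfolding ip_def by simp
      thus ?thesis by simp
    qed
  qed
  define S where "S = msub Kt Kinv"
  define z where "z = mv n Kinv (mv n M x)"
  have Mz: "mv n K z i = mv n M x i" if "i < n" for i
    unfolding z_def using mv_inv[OF inv that] .
  define D where "D = (\<lambda>i. Ptc n Kt M x i - Pc n Kinv M x i)"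
  have D_eq: "D = mv n S (mv n M x)"
  proof -
    have "mm n S M = (\<lambda>i j. mm n Kt M i j - mm n Kinv M i j)"
      unfolding S_def mm_def msub_def by (simp add: left_diff_distrib sum_subtractf)
    thus ?thesis unfolding D_def Ptc_def Pc_def mv_mv
      by (simp add: mv_def sum_subtractf left_diff_distrib)
  qed
  have EN_eq: "EN n K Kinv Kt z = D"
  proof -
    have "EN n K Kinv Kt z = mv n S (mv n K z)"
      unfolding EN_def S_def mv_mv[symmetric] ..
    also have "\<dots> = mv n S (mv n M x)" by (rule mv_cong) (rule Mz)
    finally show ?thesis using D_eq by simp
  qed
  have e1: "ip n M D x = ip n K D z"
    unfolding ip_sym[OF symM] ip_sym[OF symK] using Mz by (intro sum.cong) auto
  have e2: "ip n K z z = ip n M z x"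
    unfolding ip_sym[OF symM] ip_sym[OF symK] using Mz by (intro sum.cong) auto
  define k where "k = Re (ip n K z z)"
  define n0 where "n0 = norm0 n M x"
  have k0: "k \<ge> 0" using psdK k_def by simp
  have xx0: "Re (ip n M x x) \<ge> 0" using psdM[rule_format, of x] by simp
  have n0sq: "n0^2 = Re (ip n M x x)" unfolding n0_def norm0_def using xx0 by (rule real_sqrt_pow2)
  have n00: "n0 \<ge> 0" unfolding n0_def norm0_def using xx0 by simp
  have kb: "k \<le> cP * n0^2"
  proof -
    have "k \<le> cmod (ip n K z z)" unfolding k_def by (rule complex_Re_le_cmod)
    also have "\<dots> = cmod (ip n M z x)" using e2 by simp
    also have "\<dots> \<le> sqrt (Re (ip n M z z)) * sqrt (Re (ip n M x x))" by (rule cs[OF symM psdM])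
    also have "\<dots> \<le> sqrt (cP * k) * n0"
      unfolding n0_def norm0_def k_def
      by (rule mult_right_mono) (use poin xx0 in auto)
    finally have 1: "k \<le> sqrt (cP * k) * n0" .
    show ?thesis
    proof (cases "k = 0")
      case True thus ?thesis using assms by simp
    next
      case False
      hence kp: "k > 0" using k0 by simp
      have "k^2 \<le> (sqrt (cP * k) * n0)^2" using 1 k0 by (rule power_mono)
      also have "\<dots> = cP * k * n0^2" using assms k0 by (simp add: power_mult_distrib)
      finally have "k * k \<le> (cP * n0^2) * k" by (simp add: power2_eq_square algebra_simps)
      thus ?thesis using kp by simp
    qed
  qed
  have "cmod (ip n M D x) = cmod (ip n K D z)" using e1 by simp
  also have "\<dots> \<le> sqrt (Re (ip n K D D)) * sqrt (Re (ip n K z z))" by (rule cs[OF symK psdK])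
  also have "\<dots> \<le> norm1 n M K D * norm1 n M K z"
    unfolding norm1_def using psdM psdK
    by (intro mult_mono real_sqrt_le_mono) auto
  also have "\<dots> \<le> (C * \<gamma>1 ^ N * norm1 n M K z) * norm1 n M K z"
    using EN1 EN_eq by (intro mult_right_mono) (auto simp: norm1_def intro!: add_nonneg_nonneg psdM[rule_format] psdK[rule_format])
  also have "\<dots> = C * \<gamma>1 ^ N * (Re (ip n M z z) + k)"
    unfolding norm1_def k_def using psdM psdK
    by (simp add: mult.assoc)
  also have "\<dots> \<le> C * \<gamma>1 ^ N * (cP * k + k)"
    using poin assms g1 unfolding k_def by (intro mult_left_mono) auto
  also have "\<dots> = C * \<gamma>1 ^ N * (cP + 1) * k" by (simp add: algebra_simps)
  also have "\<dots> \<le> C * \<gamma>1 ^ N * (cP + 1) * (cP * n0^2)"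
    using kb assms g1 by (intro mult_left_mono) auto
  finally show "cmod (ip n M (\<lambda>i. Ptc n Kt M x i - Pc n Kinv M x i) x)
                      \<le> C * (cP + 1) * cP * \<gamma>1 ^ N * (norm0 n M x)\<^sup>2"
    unfolding D_def n0_def by (simp add: algebra_simps)
qed

end
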